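(* Let $K$ be a finite simplicial complex, $|\cdot|$ a norm on $\mathbb{R}^n$, and $f\colon|K|\to\mathbb{R}^n$ a piecewise linear function that has a root in $|K|$. Then $\mathrm{rob}(f)$ is a critical value of $f$, i.e. there is a simplex $\Delta\in K$ with $\mathrm{rob}(f)=\min_{x\in\Delta}|f(x)|$.
   Context: A function is piecewise linear on $|K|$ if it is affine on each simplex of $K$. For $\alpha\ge0$, an $\alpha$-perturbation of $f$ is a continuous $g\colon|K|\to\mathbb{R}^n$ with $\max_{x\in|K|}|g(x)-f(x)|\le\alpha$. For $f$ having a root, $\mathrm{rob}(f):=\max\{\alpha\ge0:\text{every }\alpha\text{-perturbation of }f\text{ has a root in }|K|\}$ (this set is closed and bounded). *)

theory Defs
  imports "HOL-Analysis.Analysis"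
begin

definition is_norm :: "('v::real_vector \<Rightarrow> real) \<Rightarrow> bool" where
  "is_norm N \<longleftrightarrow>
     (\<forall>x. 0 \<le> N x) \<and> (\<forall>x. N x = 0 \<longleftrightarrow> x = 0) \<and>
     (\<forall>c x. N (c *\<^sub>R x) = \<bar>c\<bar> * N x) \<and>
     (\<forall>x y. N (x + y) \<le> N x + N y)"

definition cplx_body :: "'a set set \<Rightarrow> 'a set" where
  "cplx_body K = \<Union>K"

definition piecewise_linear_on ::
    "'a::euclidean_space set set \<Rightarrow> ('a \<Rightarrow> 'b::real_normed_vector) \<Rightarrow> bool" where
  "piecewise_linear_on K f \<longleftrightarrow>
     (\<forall>D\<in>K. \<exists>A b. linear A \<and> (\<forall>x\<in>D. f x = A x + b))"

definition perturbation ::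
    "('b::real_normed_vector \<Rightarrow> real) \<Rightarrow> 'a::euclidean_space set set \<Rightarrow> ('a \<Rightarrow> 'b) \<Rightarrow> real \<Rightarrow> ('a \<Rightarrow> 'b) \<Rightarrow> bool" where
  "perturbation N K f \<alpha> g \<longleftrightarrow>
     continuous_on (cplx_body K) g \<and> (\<forall>x\<in>cplx_body K. N (g x - f x) \<le> \<alpha>)"

text \<open>rob(f) = max of the alphas such that every alpha-perturbation has a root in |K|
  (the set is closed and bounded, so the max is its supremum).\<close>
definition rob ::
    "('b::real_normed_vector \<Rightarrow> real) \<Rightarrow> 'a::euclidean_space set set \<Rightarrow> ('a \<Rightarrow> 'b) \<Rightarrow> real" where
  "rob N K f = Sup {\<alpha>. 0 \<le> \<alpha> \<and>
      (\<forall>g. perturbation N K f \<alpha> g \<longrightarrow> (\<exists>x\<in>cplx_body K. g x = 0))}"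

end

theory Submission
  imports Defs
begin


lemma radial_retraction:
  fixes S :: "'a::euclidean_space set"
  assumes "convex S" "bounded S" "closed S" and arelS: "a \<in> rel_interior S"
  obtains r where "continuous_on (S - {a}) r" "r ` (S - {a}) \<subseteq> rel_frontier S"
    "\<And>x. x \<in> rel_frontier S \<Longrightarrow> r x = x"
    "\<And>x. x \<in> S - {a} \<Longrightarrow> \<exists>d\<ge>1. r x = a + d *\<^sub>R (x - a)"
proof -
  have "\<exists>d. 0 < d \<and> (a + d *\<^sub>R l) \<in> rel_frontier S \<and>
            (\<forall>e. 0 \<le> e \<and> e < d \<longrightarrow> (a + e *\<^sub>R l) \<in> rel_interior S)"
    if "(a + l) \<in> affine hull S" "l \<noteq> 0" for l
    using ray_to_rel_frontier [OF \<open>bounded S\<close> arelS] that by metis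
  then obtain dd
    where dd1: "\<And>l. \<lbrakk>(a + l) \<in> affine hull S; l \<noteq> 0\<rbrakk> \<Longrightarrow> 0 < dd l \<and> (a + dd l *\<^sub>R l) \<in> rel_frontier S"
      and dd2: "\<And>l e. \<lbrakk>(a + l) \<in> affine hull S; e < dd l; 0 \<le> e; l \<noteq> 0\<rbrakk>
                      \<Longrightarrow> (a + e *\<^sub>R l) \<in> rel_interior S"
    by metis+
  have aaffS: "a \<in> affine hull S"
    by (meson arelS subsetD hull_inc rel_interior_subset)
  have "((\<lambda>z. z - a) ` (affine hull S - {a})) = ((\<lambda>z. z - a) ` (affine hull S)) - {0}"
    by auto
  moreover have "continuous_on (((\<lambda>z. z - a) ` (affine hull S)) - {0}) (\<lambda>x. dd x *\<^sub>R x)"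
  proof (rule continuous_on_compact_surface_projection)
    show "compact (rel_frontier ((\<lambda>z. z - a) ` S))"
      by (simp add: \<open>bounded S\<close> bounded_translation_minus compact_rel_frontier_bounded)
    have releq: "rel_frontier ((\<lambda>z. z - a) ` S) = (\<lambda>z. z - a) ` rel_frontier S"
      using rel_frontier_translation [of "-a"] add.commute by simp
    also have "\<dots> \<subseteq> (\<lambda>z. z - a) ` (affine hull S) - {0}"
      using rel_frontier_affine_hull arelS rel_frontier_def by fastforce
    finally show "rel_frontier ((\<lambda>z. z - a) ` S) \<subseteq> (\<lambda>z. z - a) ` (affine hull S) - {0}" .
    show "cone ((\<lambda>z. z - a) ` (affine hull S))"
      by (rule subspace_imp_cone)
         (use aaffS in \<open>simp add: subspace_affine image_comp o_def affine_translation_aux [of a]\<close>)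
    show "(0 < k \<and> k *\<^sub>R x \<in> rel_frontier ((\<lambda>z. z - a) ` S)) \<longleftrightarrow> (dd x = k)"
         if x: "x \<in> (\<lambda>z. z - a) ` (affine hull S) - {0}" for k x
    proof
      show "dd x = k \<Longrightarrow> 0 < k \<and> k *\<^sub>R x \<in> rel_frontier ((\<lambda>z. z - a) ` S)"
      using dd1 [of x] that image_iff by (fastforce simp add: releq)
    next
      assume k: "0 < k \<and> k *\<^sub>R x \<in> rel_frontier ((\<lambda>z. z - a) ` S)"
      have False if "dd x < k"
      proof -
        have "k \<noteq> 0" "a + k *\<^sub>R x \<in> closure S"
          using k closure_translation [of "-a"]
          by (auto simp: rel_frontier_def cong: image_cong_simp)
        then have segsub: "open_segment a (a + k *\<^sub>R x) \<subseteq> rel_interior S"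
          by (metis rel_interior_closure_convex_segment [OF \<open>convex S\<close> arelS])
        have "x \<noteq> 0" and xaffS: "a + x \<in> affine hull S"
          using x by auto
        then have "0 < dd x" and inS: "a + dd x *\<^sub>R x \<in> rel_frontier S"
          using dd1 by auto
        moreover have "a + dd x *\<^sub>R x \<in> open_segment a (a + k *\<^sub>R x)"
          unfolding in_segment
        proof (intro conjI exI)
          show "a + dd x *\<^sub>R x = (1 - dd x / k) *\<^sub>R a + (dd x / k) *\<^sub>R (a + k *\<^sub>R x)"
            using k by (simp add: that algebra_simps)
        qed (use \<open>x \<noteq> 0\<close> \<open>0 < dd x\<close> that in auto)
        ultimately show ?thesis
          using segsub by (auto simp: rel_frontier_def)
      qed
      moreover have False if "k < dd x"
        using x k that rel_frontier_def
        by (fastforce simp: algebra_simps releq dest!: dd2)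
      ultimately show "dd x = k"
        by fastforce
    qed
  qed
  ultimately have *: "continuous_on ((\<lambda>z. z - a) ` (affine hull S - {a})) (\<lambda>x. dd x *\<^sub>R x)"
    by auto
  have "continuous_on (affine hull S - {a}) ((\<lambda>x. a + dd x *\<^sub>R x) \<circ> (\<lambda>z. z - a))"
    by (intro * continuous_intros continuous_on_compose)
  then have contdd: "continuous_on (S - {a}) ((\<lambda>x. a + dd x *\<^sub>R x) \<circ> (\<lambda>z. z - a))"
    by (rule continuous_on_subset) (auto intro: hull_inc)
  have ge1: "1 \<le> dd (x - a)" if x: "x \<in> S" "x \<noteq> a" for x
  proof (rule ccontr)
    assume "\<not> 1 \<le> dd (x - a)"
    then have lt: "dd (x-a) < 1" by simp
    have "x \<in> closure S" using x closure_subset by blast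
    then have segsub: "open_segment a x \<subseteq> rel_interior S"
      by (metis rel_interior_closure_convex_segment [OF \<open>convex S\<close> arelS])
    have xaffS: "a + (x - a) \<in> affine hull S" using x by (simp add: hull_inc)
    then have "0 < dd (x-a)" and inS: "a + dd (x-a) *\<^sub>R (x-a) \<in> rel_frontier S"
      using dd1 x by auto
    moreover have "a + dd (x-a) *\<^sub>R (x-a) \<in> open_segment a x"
      unfolding in_segment
    proof (intro exI conjI)
      show "a + dd (x-a) *\<^sub>R (x-a) = (1 - dd (x-a)) *\<^sub>R a + (dd (x-a)) *\<^sub>R x"
        by (simp add: algebra_simps)
    qed (use x \<open>0 < dd (x-a)\<close> lt in auto)
    ultimately show False
      using segsub by (auto simp: rel_frontier_def)
  qed
  show ?thesis
  proof
    show "continuous_on (S - {a}) (\<lambda>x. a + dd (x-a) *\<^sub>R (x-a))"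
      using contdd by (simp add: o_def)
    show "(\<lambda>x. a + dd (x-a) *\<^sub>R (x-a)) ` (S - {a}) \<subseteq> rel_frontier S"
    proof (rule image_subsetI)
      fix x assume "x \<in> S - {a}"
      then have "a + (x - a) \<in> affine hull S" "x - a \<noteq> 0" by (auto intro: hull_inc)
      then show "a + dd (x-a) *\<^sub>R (x-a) \<in> rel_frontier S" using dd1 by blast
    qed
    show "\<exists>d\<ge>1. a + dd (x-a) *\<^sub>R (x-a) = a + d *\<^sub>R (x - a)" if "x \<in> S - {a}" for x
      using ge1 that by blast
    show "a + dd (x-a) *\<^sub>R (x-a) = x" if x: "x \<in> rel_frontier S" for x
    proof -
      have "x \<noteq> a"
        using that arelS by (auto simp: rel_frontier_def)
      have xS: "x \<in> S" using x \<open>closed S\<close> by (simp add: rel_frontier_def)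
      have False if "1 < dd (x-a)"
        using x that dd2 [of "x - a" 1] \<open>x \<noteq> a\<close> closure_affine_hull
        by (auto simp: rel_frontier_def)
      with ge1[OF xS \<open>x \<noteq> a\<close>] have "dd (x-a) = 1"
        by fastforce
      then show ?thesis
        by simp
    qed
  qed
qed




lemma isnorm_nonneg: "is_norm N \<Longrightarrow> 0 \<le> N x" by (simp add: is_norm_def)
lemma isnorm_zero_iff: "is_norm N \<Longrightarrow> N x = 0 \<longleftrightarrow> x = 0" by (simp add: is_norm_def)
lemma isnorm_scale: "is_norm N \<Longrightarrow> N (c *\<^sub>R x) = \<bar>c\<bar> * N x" by (simp add: is_norm_def)
lemma isnorm_tri: "is_norm N \<Longrightarrow> N (x + y) \<le> N x + N y" by (simp add: is_norm_def)
lemma isnorm_zero: "is_norm N \<Longrightarrow> N 0 = 0" by (simp add: is_norm_def)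

lemma isnorm_minus: "is_norm N \<Longrightarrow> N (- x) = N x"
  using isnorm_scale[of N "-1" x] by simp

lemma isnorm_commute: "is_norm N \<Longrightarrow> N (x - y) = N (y - x)"
  by (metis isnorm_minus minus_diff_eq)

lemma isnorm_tri_diff: "is_norm N \<Longrightarrow> N x - N y \<le> N (x - y)"
  using isnorm_tri[of N "x - y" y] by simp

lemma isnorm_tri_diff': "is_norm N \<Longrightarrow> N (x - y) \<le> N x + N y"
  using isnorm_tri[of N x "- y"] isnorm_minus[of N y] by simp

lemma isnorm_sum: assumes "is_norm N" "finite I" shows "N (sum g I) \<le> (\<Sum>i\<in>I. N (g i))"
  using assms(2)
proof (induction I rule: finite_induct)
  case empty then show ?case by (simp add: isnorm_zero[OF assms(1)])
next
  case (insert i I)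
  then show ?case using isnorm_tri[OF assms(1), of "g i" "sum g I"] by simp
qed

lemma isnorm_conv: "is_norm N \<Longrightarrow> 0 \<le> t \<Longrightarrow> t \<le> 1 \<Longrightarrow>
   N (t *\<^sub>R a + (1 - t) *\<^sub>R b) \<le> t * N a + (1 - t) * N b"
  using isnorm_tri[of N "t *\<^sub>R a" "(1 - t) *\<^sub>R b"] isnorm_scale[of N t a] isnorm_scale[of N "1-t" b]
  by simp

lemma isnorm_bound:
  fixes N :: "'v::euclidean_space \<Rightarrow> real"
  assumes "is_norm N" shows "\<exists>c\<ge>0. \<forall>x. N x \<le> c * norm x"
proof (intro exI[of _ "\<Sum>b\<in>Basis. N b"] conjI allI)
  show "0 \<le> (\<Sum>b\<in>Basis. N b)" using assms by (simp add: sum_nonneg isnorm_nonneg)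
  fix x :: 'v
  have "N x = N (\<Sum>b\<in>Basis. (x \<bullet> b) *\<^sub>R b)" by (simp add: euclidean_representation)
  also have "\<dots> \<le> (\<Sum>b\<in>Basis. N ((x \<bullet> b) *\<^sub>R b))" by (rule isnorm_sum[OF assms]) simp
  also have "\<dots> = (\<Sum>b\<in>Basis. \<bar>x \<bullet> b\<bar> * N b)" by (simp add: isnorm_scale[OF assms])
  also have "\<dots> \<le> (\<Sum>b\<in>Basis. norm x * N b)"
    by (intro sum_mono mult_right_mono) (auto simp: Basis_le_norm isnorm_nonneg[OF assms])
  also have "\<dots> = (\<Sum>b\<in>Basis. N b) * norm x" by (simp add: sum_distrib_left mult.commute)
  finally show "N x \<le> (\<Sum>b\<in>Basis. N b) * norm x" .
qed

lemma isnorm_continuous: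
  fixes N :: "'v::euclidean_space \<Rightarrow> real"
  assumes "is_norm N" shows "continuous_on UNIV N"
proof -
  obtain c where c: "c \<ge> 0" "\<And>x. N x \<le> c * norm x" using isnorm_bound[OF assms] by blast
  have "c-lipschitz_on UNIV N"
  proof (rule lipschitz_onI)
    fix x y :: 'v
    have "N x - N y \<le> c * norm (x - y)" using isnorm_tri_diff[OF assms, of x y] c(2)[of "x - y"] by simp
    moreover have "N y - N x \<le> c * norm (x - y)"
      using isnorm_tri_diff[OF assms, of y x] c(2)[of "y - x"] by (simp add: norm_minus_commute)
    ultimately show "dist (N x) (N y) \<le> c * dist x y" by (simp add: dist_real_def dist_norm abs_le_iff)
  qed (use c in auto)
  then show ?thesis by (rule lipschitz_on_continuous_on)
qed

lemma isnorm_continuous_on_comp: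
  fixes N :: "'v::euclidean_space \<Rightarrow> real"
  assumes "is_norm N" "continuous_on S g" shows "continuous_on S (\<lambda>x. N (g x))"
  using continuous_on_compose2[OF isnorm_continuous[OF assms(1)] assms(2)] by simp

lemma isnorm_ray_mono:
  assumes "is_norm N" "1 \<le> s" "N p \<le> N q"
  shows "N q \<le> N ((1 - s) *\<^sub>R p + s *\<^sub>R q)"
proof -
  define y where "y = (1 - s) *\<^sub>R p + s *\<^sub>R q"
  have s0: "0 < s" using assms by simp
  have "q = (1/s) *\<^sub>R y + (1 - 1/s) *\<^sub>R p"
    using s0 by (simp add: y_def algebra_simps scaleR_add_right diff_divide_distrib)
  then have "N q \<le> (1/s) * N y + (1 - 1/s) * N p"
    using isnorm_conv[OF assms(1), of "1/s" y p] assms(2) s0 by simp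
  then have "s * N q \<le> N y + (s - 1) * N p"
    using s0 by (simp add: field_simps)
  moreover have "(s - 1) * N p \<le> (s - 1) * N q" using assms by (intro mult_left_mono) auto
  ultimately show ?thesis unfolding y_def[symmetric] by (simp add: algebra_simps)
qed




locale setting =
  fixes K :: "'a::euclidean_space set set"
    and N :: "real ^ 'n \<Rightarrow> real"
    and f :: "'a \<Rightarrow> real ^ 'n"
  assumes sc: "simplicial_complex K"
    and nN: "is_norm N"
    and pl: "piecewise_linear_on K f"
    and root: "\<exists>x\<in>cplx_body K. f x = 0"
begin

abbreviation "A \<equiv> cplx_body K"

definition W :: "real \<Rightarrow> 'a set" where "W t = {x \<in> A. t \<le> N (f x)}"

definition Ext :: "real \<Rightarrow> bool" where
  "Ext t \<longleftrightarrow> (\<exists>e. continuous_on A e \<and> e ` A \<subseteq> - {0} \<and> (\<forall>x\<in>W t. e x = f x))"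

definition Sset :: "real set" where
  "Sset = {\<alpha>. 0 \<le> \<alpha> \<and> (\<forall>g. perturbation N K f \<alpha> g \<longrightarrow> (\<exists>x\<in>cplx_body K. g x = 0))}"

lemma rob_eq: "rob N K f = Sup Sset" by (simp add: rob_def Sset_def)

lemma finK: "finite K" using sc by (simp add: simplicial_complex_def)

lemma simplexK: "D \<in> K \<Longrightarrow> polytope D"
  using sc simplex_imp_polytope unfolding simplicial_complex_def by metis

lemma compactD: "D \<in> K \<Longrightarrow> compact D" by (simp add: polytope_imp_compact simplexK)
lemma convexD: "D \<in> K \<Longrightarrow> convex D" by (simp add: polytope_imp_convex simplexK)
lemma closedD: "D \<in> K \<Longrightarrow> closed D" by (simp add: polytope_imp_closed simplexK)

lemma faceK: "D \<in> K \<Longrightarrow> F face_of D \<Longrightarrow> F \<in> K"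
  using sc by (auto simp: simplicial_complex_def)

lemma interK: "D \<in> K \<Longrightarrow> E \<in> K \<Longrightarrow> (D \<inter> E) face_of D"
  using sc by (auto simp: simplicial_complex_def)

lemma compactA: "compact A"
  unfolding cplx_body_def using finK compactD by (intro compact_Union) auto

lemma closedA: "closed A" using compactA compact_imp_closed by blast

lemma A_ne: "A \<noteq> {}" using root by auto

lemma aff_comb:
  assumes "D \<in> K" "x \<in> D" "y \<in> D" "(1 - t) *\<^sub>R x + t *\<^sub>R y \<in> D"
  shows "f ((1 - t) *\<^sub>R x + t *\<^sub>R y) = (1 - t) *\<^sub>R f x + t *\<^sub>R f y"
proof -
  obtain L b where L: "linear L" "\<And>z. z \<in> D \<Longrightarrow> f z = L z + b"
    using pl assms(1) by (auto simp: piecewise_linear_on_def)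
  have "L ((1 - t) *\<^sub>R x + t *\<^sub>R y) = (1-t) *\<^sub>R L x + t *\<^sub>R L y"
    by (simp only: linear_add[OF L(1)] linear_scale[OF L(1)])
  moreover have "(1 - t) *\<^sub>R (L x + b) + t *\<^sub>R (L y + b) = (1-t) *\<^sub>R L x + t *\<^sub>R L y + b"
    by (simp add: scaleR_add_right scaleR_diff_left)
  moreover have "f ((1 - t) *\<^sub>R x + t *\<^sub>R y) = L ((1 - t) *\<^sub>R x + t *\<^sub>R y) + b"
    using L(2) assms(4) by blast
  moreover have "f x = L x + b" "f y = L y + b" using L(2) assms(2,3) by blast+
  ultimately show ?thesis by metis
qed

lemma contD: "D \<in> K \<Longrightarrow> continuous_on D f"
proof -
  assume D: "D \<in> K"
  obtain L b where L: "linear L" "\<And>z. z \<in> D \<Longrightarrow> f z = L z + b"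
    using pl D by (auto simp: piecewise_linear_on_def)
  have "continuous_on D (\<lambda>z. L z + b)"
    using linear_continuous_on[OF L(1)[unfolded linear_conv_bounded_linear]]
    by (intro continuous_intros) auto
  then show ?thesis by (rule continuous_on_eq) (simp add: L(2))
qed

lemma contf: "continuous_on A f"
proof -
  have "continuous_on (\<Union>D\<in>K. id D) f"
    by (rule continuous_on_closed_Union) (simp_all add: finK closedD contD)
  then show ?thesis by (simp add: cplx_body_def)
qed

lemma contNf: "continuous_on A (\<lambda>x. N (f x))"
  by (rule isnorm_continuous_on_comp[OF nN contf])

lemma closedW: "closed (W t)"
proof -
  have "closed (A \<inter> (\<lambda>x. N (f x)) -` {t..})"
    by (rule continuous_closed_preimage[OF contNf closedA]) simp
  moreover have "A \<inter> (\<lambda>x. N (f x)) -` {t..} = W t" by (auto simp: W_def)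
  ultimately show ?thesis by simp
qed

lemma WA: "W t \<subseteq> A" by (auto simp: W_def)

lemma closedinW: "closedin (top_of_set A) (W t)"
  by (rule closed_subset[OF WA closedW])

end



context setting begin

lemma L1:
  assumes a: "0 < \<alpha>" and g: "perturbation N K f \<alpha> g" and nz: "\<forall>x\<in>A. g x \<noteq> 0"
  shows "Ext \<alpha>"
proof -
  have contg: "continuous_on A g" and gb: "\<And>x. x \<in> A \<Longrightarrow> N (g x - f x) \<le> \<alpha>"
    using g by (auto simp: perturbation_def)
  have hom: "homotopic_with_canon (\<lambda>x. True) (W \<alpha>) (- {0}) g f"
  proof (rule homotopic_with_linear)
    show "continuous_on (W \<alpha>) g" using contg WA continuous_on_subset by blast
    show "continuous_on (W \<alpha>) f" using contf WA continuous_on_subset by blast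
    show "closed_segment (g x) (f x) \<subseteq> - {0}" if x: "x \<in> W \<alpha>" for x
    proof
      fix z assume z: "z \<in> closed_segment (g x) (f x)"
      then obtain u where u: "0 \<le> u" "u \<le> 1" "z = (1 - u) *\<^sub>R g x + u *\<^sub>R f x"
        by (auto simp: in_segment)
      have xA: "x \<in> A" and fx: "\<alpha> \<le> N (f x)" using x by (auto simp: W_def)
      show "z \<in> - {0}"
      proof
        assume "z \<in> {0}"
        then have z0: "(1 - u) *\<^sub>R g x + u *\<^sub>R f x = 0" using u by simp
        then have "f x = - ((1 - u) *\<^sub>R (g x - f x))"
          by (simp add: algebra_simps)
        then have "N (f x) = N (- ((1 - u) *\<^sub>R (g x - f x)))"
          by (rule arg_cong)
        also have "\<dots> = (1 - u) * N (g x - f x)"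
          using isnorm_minus[OF nN] isnorm_scale[OF nN] u by simp
        finally have "N (f x) = (1 - u) * N (g x - f x)" .
        also have "\<dots> \<le> (1 - u) * \<alpha>" using gb[OF xA] u by (intro mult_left_mono) auto
        finally have "\<alpha> \<le> (1 - u) * \<alpha>" using fx by simp
        then have "u * \<alpha> \<le> 0" by (simp add: algebra_simps)
        then have "u \<le> 0" using a by (simp add: mult_le_0_iff)
        then have "u = 0" using u by simp
        then show False using z0 nz xA by simp
      qed
    qed
  qed
  have anr: "ANR (W \<alpha>) \<and> ANR A \<or> ANR (- {0::real^'n})" using open_imp_ANR[of "- {0::real^'n}"] by (simp add: open_Compl)
  have gA: "g \<in> A \<rightarrow> - {0}" using nz by auto
  obtain g' where "homotopic_with_canon (\<lambda>x. True) A (- {0}) g g'" 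
     "continuous_on A g'" "g' ` A \<subseteq> - {0}" "\<And>x. x \<in> W \<alpha> \<Longrightarrow> g' x = f x"
    using Borsuk_homotopy_extension_homotopic[OF closedinW anr contg gA hom] by blast
  then show ?thesis unfolding Ext_def by blast
qed

lemma L2:
  assumes a: "0 < \<alpha>" and E: "Ext \<alpha>"
  shows "\<exists>g. perturbation N K f \<alpha> g \<and> (\<forall>x\<in>A. g x \<noteq> 0)"
proof -
  obtain e where conte: "continuous_on A e" and enz: "e ` A \<subseteq> - {0}" and ef: "\<And>x. x \<in> W \<alpha> \<Longrightarrow> e x = f x"
    using E by (auto simp: Ext_def)
  have contNe: "continuous_on A (\<lambda>x. N (e x))" by (rule isnorm_continuous_on_comp[OF nN conte])
  obtain xm where "xm \<in> A" and xm: "\<And>y. y \<in> A \<Longrightarrow> N (e y) \<le> N (e xm)"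
    using continuous_attains_sup[OF compactA A_ne contNe] by blast
  define M where "M = N (e xm)"
  have M0: "0 \<le> M" by (simp add: M_def isnorm_nonneg[OF nN])
  have eM: "\<And>x. x \<in> A \<Longrightarrow> N (e x) \<le> M" using xm M_def by simp
  define K1 where "K1 = {x \<in> A. \<alpha> \<le> N (e x - f x)}"
  have contd: "continuous_on A (\<lambda>x. N (e x - f x))"
    by (rule isnorm_continuous_on_comp[OF nN]) (intro continuous_intros conte contf)
  have "closed (A \<inter> (\<lambda>x. N (e x - f x)) -` {\<alpha>..})"
    by (rule continuous_closed_preimage[OF contd closedA]) simp
  moreover have "A \<inter> (\<lambda>x. N (e x - f x)) -` {\<alpha>..} = K1" by (auto simp: K1_def)
  ultimately have "closed K1" by simp
  moreover have "K1 \<subseteq> A" by (auto simp: K1_def)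
  ultimately have cK1: "compact K1" using compact_Int_closed[OF compactA] by (metis Int_absorb1)
  have K1lt: "N (f x) < \<alpha>" if "x \<in> K1" for x
  proof (rule ccontr)
    assume "\<not> N (f x) < \<alpha>"
    then have "x \<in> W \<alpha>" using that by (auto simp: W_def K1_def)
    then have "e x = f x" by (rule ef)
    then show False using that a by (simp add: K1_def isnorm_zero[OF nN])
  qed
  obtain \<gamma> where g0: "0 \<le> \<gamma>" and ga: "\<gamma> < \<alpha>" and gK1: "\<And>x. x \<in> K1 \<Longrightarrow> N (f x) \<le> \<gamma>"
  proof (cases "K1 = {}")
    case True then show ?thesis using that[of 0] a by auto
  next
    case False
    have "continuous_on K1 (\<lambda>x. N (f x))" using contNf by (rule continuous_on_subset) (auto simp: K1_def)
    then obtain x1 where "x1 \<in> K1" "\<And>y. y \<in> K1 \<Longrightarrow> N (f y) \<le> N (f x1)"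
      using continuous_attains_sup[OF cK1 False] by blast
    then show ?thesis using that[of "N (f x1)"] K1lt isnorm_nonneg[OF nN] by blast
  qed
  define \<sigma> where "\<sigma> = (\<alpha> - \<gamma>) / (M + \<alpha>)"
  have s0: "0 < \<sigma>" using ga a M0 by (simp add: \<sigma>_def)
  have s1: "\<sigma> \<le> 1" using ga a M0 g0 by (simp add: \<sigma>_def)
  have sM: "\<sigma> * (M + \<alpha>) = \<alpha> - \<gamma>" using a M0 by (simp add: \<sigma>_def)
  define \<theta> where "\<theta> = (\<lambda>x. max \<sigma> (min 1 ((N (f x) - \<gamma>) / (\<alpha> - \<gamma>))))"
  define g where "g = (\<lambda>x. \<theta> x *\<^sub>R e x)"
  have contth: "continuous_on A \<theta>" unfolding \<theta>_def by (intro continuous_intros contNf) (use ga in auto)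
  have th: "\<sigma> \<le> \<theta> x" "\<theta> x \<le> 1" for x using s1 by (auto simp: \<theta>_def)
  show ?thesis
  proof (intro exI conjI ballI)
    show "g x \<noteq> 0" if "x \<in> A" for x
      using that enz th[of x] s0 by (auto simp: g_def)
    have "N (g x - f x) \<le> \<alpha>" if xA: "x \<in> A" for x
    proof -
      have eq: "g x - f x = \<theta> x *\<^sub>R (e x - f x) + (1 - \<theta> x) *\<^sub>R (- f x)"
        unfolding g_def by (simp add: scaleR_diff_right scaleR_diff_left)
      have bnd: "N (g x - f x) \<le> \<theta> x * N (e x - f x) + (1 - \<theta> x) * N (f x)"
        using isnorm_conv[OF nN, of "\<theta> x" "e x - f x" "- f x"] th[of x] s0 isnorm_minus[OF nN]
        by (simp add: eq)
      show ?thesis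
      proof (cases "\<alpha> \<le> N (f x)")
        case True
        then have "e x = f x" using ef xA by (simp add: W_def)
        have "1 \<le> (N (f x) - \<gamma>) / (\<alpha> - \<gamma>)" using True ga by (simp add: le_divide_eq)
        then have "\<theta> x = 1" using s1 by (simp add: \<theta>_def)
        then have "g x - f x = 0" using \<open>e x = f x\<close> by (simp add: g_def)
        then show ?thesis using a by (simp add: isnorm_zero[OF nN])
      next
        case False
        show ?thesis
        proof (cases "x \<in> K1")
          case True
          have "(N (f x) - \<gamma>) / (\<alpha> - \<gamma>) \<le> 0" using gK1[OF True] ga by (simp add: divide_nonpos_pos)
          then have t: "\<theta> x = \<sigma>" using s0 s1 by (simp add: \<theta>_def)
          have "N (e x - f x) \<le> M + \<alpha>"
            using isnorm_tri_diff'[OF nN, of "e x" "f x"] eM[OF xA] False by simp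
          then have "\<theta> x * N (e x - f x) \<le> \<sigma> * (M + \<alpha>)" using t s0 by (simp add: mult_left_mono)
          moreover have "(1 - \<theta> x) * N (f x) \<le> 1 * N (f x)"
            using t s0 isnorm_nonneg[OF nN, of "f x"] by (intro mult_right_mono) auto
          then have "(1 - \<theta> x) * N (f x) \<le> \<gamma>" using gK1[OF True] by simp
          ultimately show ?thesis using bnd sM by simp
        next
          case False': False
          then have "N (e x - f x) < \<alpha>" using xA by (auto simp: K1_def)
          then have "\<theta> x * N (e x - f x) \<le> \<theta> x * \<alpha>" using th[of x] s0 by (intro mult_left_mono) auto
          moreover have "(1 - \<theta> x) * N (f x) \<le> (1 - \<theta> x) * \<alpha>" using th[of x] False by (intro mult_left_mono) auto
          ultimately show ?thesis using bnd by (simp add: algebra_simps)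
        qed
      qed
    qed
    moreover have "continuous_on A g" unfolding g_def by (intro continuous_intros contth conte)
    ultimately show "perturbation N K f \<alpha> g" by (simp add: perturbation_def)
  qed
qed

lemma zero_in_S: "0 \<in> Sset"
proof -
  have "\<exists>x\<in>A. g x = 0" if "perturbation N K f 0 g" for g
  proof -
    obtain x where "x \<in> A" "f x = 0" using root by blast
    moreover have "N (g x - f x) \<le> 0" using that \<open>x \<in> A\<close> by (simp add: perturbation_def)
    ultimately show ?thesis using isnorm_nonneg[OF nN, of "g x - f x"] isnorm_zero_iff[OF nN] by force
  qed
  then show ?thesis by (simp add: Sset_def)
qed

lemma bdd_S: "bdd_above Sset"
proof -
  obtain xm where "xm \<in> A" and xm: "\<And>y. y \<in> A \<Longrightarrow> N (f y) \<le> N (f xm)"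
    using continuous_attains_sup[OF compactA A_ne contNf] by blast
  have "\<alpha> \<le> N (f xm)" if "\<alpha> \<in> Sset" for \<alpha>
  proof (rule ccontr)
    assume lt: "\<not> \<alpha> \<le> N (f xm)"
    define v :: "real^'n" where "v = 1"
    have v0: "v \<noteq> 0" by (simp add: v_def vec_eq_iff)
    then have Nv: "0 < N v" using isnorm_nonneg[OF nN, of v] isnorm_zero_iff[OF nN, of v] by linarith
    define c where "c = (\<alpha> / N v) *\<^sub>R v"
    have a0: "0 \<le> \<alpha>" using that by (simp add: Sset_def)
    have Nc: "N c = \<alpha>" using Nv a0 by (simp add: c_def isnorm_scale[OF nN])
    have "perturbation N K f \<alpha> (\<lambda>x. f x + c)"
      by (simp add: perturbation_def Nc) (intro continuous_intros contf)
    then have "\<exists>x\<in>A. f x + c = 0" using that unfolding Sset_def by blast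
    then obtain x where "x \<in> A" "f x + c = 0" by blast
    then have "c = - f x" by (metis eq_neg_iff_add_eq_0 add.commute)
    then have "N c = N (f x)" using isnorm_minus[OF nN] by simp
    then show False using Nc xm[OF \<open>x \<in> A\<close>] lt by simp
  qed
  then show ?thesis by (auto simp: bdd_above_def)
qed

lemma S_down: "\<beta> \<in> Sset \<Longrightarrow> 0 \<le> \<alpha> \<Longrightarrow> \<alpha> \<le> \<beta> \<Longrightarrow> \<alpha> \<in> Sset"
proof -
  assume b: "\<beta> \<in> Sset" and a: "0 \<le> \<alpha>" "\<alpha> \<le> \<beta>"
  have "\<exists>x\<in>A. g x = 0" if "perturbation N K f \<alpha> g" for g
  proof -
    have "perturbation N K f \<beta> g" using that a unfolding perturbation_def by (meson order_trans)
    then show ?thesis using b unfolding Sset_def by blast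
  qed
  then show ?thesis using a unfolding Sset_def by blast
qed

lemma rob_in: "rob N K f \<in> Sset"
proof -
  define r where "r = rob N K f"
  have r0: "0 \<le> r" using zero_in_S bdd_S by (simp add: r_def rob_eq cSup_upper)
  have "\<exists>x\<in>A. g x = 0" if g: "perturbation N K f r g" for g
  proof (rule ccontr)
    assume "\<not> (\<exists>x\<in>A. g x = 0)"
    then have nz: "\<And>x. x \<in> A \<Longrightarrow> g x \<noteq> 0" by blast
    have contg: "continuous_on A g" and gb: "\<And>x. x \<in> A \<Longrightarrow> N (g x - f x) \<le> r"
      using g by (auto simp: perturbation_def)
    obtain xd where "xd \<in> A" and xd: "\<And>y. y \<in> A \<Longrightarrow> N (g xd) \<le> N (g y)"
      using continuous_attains_inf[OF compactA A_ne isnorm_continuous_on_comp[OF nN contg]] by blast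
    define \<delta> where "\<delta> = N (g xd)"
    have d0: "0 < \<delta>" using nz[OF \<open>xd \<in> A\<close>] isnorm_nonneg[OF nN] isnorm_zero_iff[OF nN]
      by (simp add: \<delta>_def) (metis order_le_less)
    have rpos: "0 < r"
    proof (rule ccontr)
      assume "\<not> 0 < r"
      then have "r = 0" using r0 by simp
      obtain x where "x \<in> A" "f x = 0" using root by blast
      then have "N (g x - f x) \<le> 0" using gb[OF \<open>x \<in> A\<close>] \<open>r = 0\<close> by simp
      then have "g x = f x" using isnorm_nonneg[OF nN, of "g x - f x"] isnorm_zero_iff[OF nN] by force
      then show False using nz[OF \<open>x \<in> A\<close>] \<open>f x = 0\<close> by simp
    qed
    define t where "t = max (1/2) (1 - \<delta> / (2 * r))"
    have t1: "t < 1" using d0 rpos by (simp add: t_def)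
    have t0: "0 \<le> t" by (simp add: t_def)
    have tr: "(1 - t) * r \<le> \<delta> / 2" using rpos d0
      by (simp add: t_def field_simps max_def)
    have "t * r < r" using t1 rpos by simp
    then obtain s where sS: "s \<in> Sset" and ts: "t * r < s"
      using less_cSup_iff[of Sset "t * r"] zero_in_S bdd_S by (auto simp: r_def rob_eq)
    define g' where "g' = (\<lambda>x. f x + t *\<^sub>R (g x - f x))"
    have "perturbation N K f s g'"
    proof -
      have "N (g' x - f x) \<le> s" if "x \<in> A" for x
      proof -
        have "N (g' x - f x) = t * N (g x - f x)" using t0 by (simp add: g'_def isnorm_scale[OF nN])
        also have "\<dots> \<le> t * r" using gb[OF that] t0 by (simp add: mult_left_mono)
        finally show ?thesis using ts by simp
      qed
      moreover have "continuous_on A g'" unfolding g'_def by (intro continuous_intros contf contg)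
      ultimately show ?thesis by (simp add: perturbation_def)
    qed
    then obtain x where xA: "x \<in> A" and "g' x = 0" using sS by (auto simp: Sset_def)
    then have "g x = g x - g' x" by simp
    also have "\<dots> = (1 - t) *\<^sub>R (g x - f x)" unfolding g'_def by (simp add: scaleR_diff_left)
    finally have "g x = (1 - t) *\<^sub>R (g x - f x)" .
    then have "N (g x) = (1 - t) * N (g x - f x)" using t1 isnorm_scale[OF nN] by (metis abs_of_nonneg diff_ge_0_iff_ge less_imp_le)
    also have "\<dots> \<le> (1 - t) * r" using gb[OF xA] t1 by (simp add: mult_left_mono)
    finally have "N (g x) \<le> \<delta> / 2" using tr by simp
    then show False using xd[OF xA] d0 \<delta>_def by simp
  qed
  then show ?thesis using r0 by (simp add: Sset_def r_def)
qed

end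



lemma vec_id1: "(1 - u) *\<^sub>R x + u *\<^sub>R (a + d *\<^sub>R (x - a)) = (1 - ((1-u) + u*d)) *\<^sub>R a + ((1-u) + u*d) *\<^sub>R (x::'a::real_vector)"
  by (simp add: algebra_simps)
lemma vec_id2: "x - e *\<^sub>R (x - c) = (1 - e) *\<^sub>R x + e *\<^sub>R (c::'a::real_vector)"
  by (simp add: algebra_simps)

context setting begin

definition NC :: "real \<Rightarrow> real \<Rightarrow> bool" where
  "NC \<alpha> \<beta> \<longleftrightarrow> (\<forall>D\<in>K. \<forall>x0\<in>D. (\<forall>x\<in>D. N (f x0) \<le> N (f x)) \<longrightarrow> \<not> (\<alpha> \<le> N (f x0) \<and> N (f x0) \<le> \<beta>))"

definition Kn :: "real \<Rightarrow> 'a set set" where "Kn \<beta> = {D\<in>K. \<forall>x\<in>D. \<beta> < N (f x)}"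

definition facecl :: "'a set set \<Rightarrow> bool" where "facecl L \<longleftrightarrow> (\<forall>D\<in>L. \<forall>F. F face_of D \<longrightarrow> F \<in> L)"

lemma core_ind:
  assumes a: "0 < \<alpha>" "\<alpha> \<le> \<beta>" and nc: "NC \<alpha> \<beta>"
  shows "card (L - Kn \<beta>) = m \<Longrightarrow> L \<subseteq> K \<Longrightarrow> facecl L \<Longrightarrow> Kn \<beta> \<subseteq> L \<Longrightarrow>
    \<exists>\<psi>. continuous_on (\<Union>L \<inter> W \<alpha>) \<psi> \<and> \<psi> ` (\<Union>L \<inter> W \<alpha>) \<subseteq> W \<beta> \<and>
        homotopic_with_canon (\<lambda>_. True) (\<Union>L \<inter> W \<alpha>) (W \<alpha>) id \<psi>"
proof (induction m arbitrary: L)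
  case 0
  have "finite L" using 0(2) finK finite_subset by blast
  then have "L - Kn \<beta> = {}" using 0(1) by simp
  then have LKn: "L \<subseteq> Kn \<beta>" by blast
  have sub: "\<Union>L \<inter> W \<alpha> \<subseteq> W \<beta>"
  proof
    fix x assume x: "x \<in> \<Union>L \<inter> W \<alpha>"
    then obtain E where "E \<in> L" "x \<in> E" by blast
    then have "\<beta> < N (f x)" using LKn by (auto simp: Kn_def)
    then show "x \<in> W \<beta>" using x by (simp add: W_def)
  qed
  show ?case
  proof (intro exI conjI)
    show "continuous_on (\<Union>L \<inter> W \<alpha>) id" by (rule continuous_on_id')
    show "id ` (\<Union>L \<inter> W \<alpha>) \<subseteq> W \<beta>" using sub by simp
    show "homotopic_with_canon (\<lambda>_. True) (\<Union>L \<inter> W \<alpha>) (W \<alpha>) id id"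
      by (rule homotopic_with_linear) (auto intro: continuous_on_id')
  qed
next
  case (Suc m)
  define X where "X = \<Union>L \<inter> W \<alpha>"
  have finL: "finite L" using Suc(3) finK finite_subset by blast
  have ne: "L - Kn \<beta> \<noteq> {}" using Suc(2) by (metis card.empty nat.distinct(1))
  obtain D where DL: "D \<in> L - Kn \<beta>" and Dmax0: "\<And>E. E \<in> L - Kn \<beta> \<Longrightarrow> D \<subseteq> E \<Longrightarrow> D = E"
    using finite_has_maximal[OF _ ne] finL by blast
  have DK: "D \<in> K" using DL Suc(3) by blast
  have Dmax: "E = D" if "E \<in> L" "D \<subseteq> E" for E
  proof (cases "E \<in> Kn \<beta>")
    case True
    then have "D \<in> Kn \<beta>" using that DK by (auto simp: Kn_def)
    then show ?thesis using DL by simp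
  next
    case False
    then show ?thesis using Dmax0[of E] that by auto
  qed
  define L' where "L' = L - {D}"
  have cardL': "card (L' - Kn \<beta>) = m"
  proof -
    have "L' - Kn \<beta> = (L - Kn \<beta>) - {D}" by (auto simp: L'_def)
    then show ?thesis using Suc(2) DL finL by (simp add: card_Diff_singleton)
  qed
  have L'K: "L' \<subseteq> K" using Suc(3) by (auto simp: L'_def)
  have fcL': "facecl L'"
    unfolding facecl_def
  proof (intro ballI allI impI)
    fix E F assume E: "E \<in> L'" and F: "F face_of E"
    have "F \<in> L" using Suc(4) E F by (auto simp: facecl_def L'_def)
    moreover have "F \<noteq> D"
    proof
      assume "F = D"
      then have "D \<subseteq> E" using F face_of_imp_subset by blast
      then have "E = D" using Dmax E by (auto simp: L'_def)
      then show False using E by (simp add: L'_def)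
    qed
    ultimately show "F \<in> L'" by (simp add: L'_def)
  qed
  have KnL': "Kn \<beta> \<subseteq> L'" using Suc(5) DL by (auto simp: L'_def)
  obtain \<psi>' where cont\<psi>': "continuous_on (\<Union>L' \<inter> W \<alpha>) \<psi>'" and im\<psi>': "\<psi>' ` (\<Union>L' \<inter> W \<alpha>) \<subseteq> W \<beta>"
    and hom\<psi>': "homotopic_with_canon (\<lambda>_. True) (\<Union>L' \<inter> W \<alpha>) (W \<alpha>) id \<psi>'"
    using Suc.IH[OF cardL' L'K fcL' KnL'] by blast
  define X' where "X' = \<Union>L' \<inter> W \<alpha>"
  have "D \<notin> Kn \<beta>" using DL by simp
  then obtain x1 where x1: "x1 \<in> D" "N (f x1) \<le> \<beta>" using DK by (auto simp: Kn_def not_less)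
  have contND: "continuous_on D (\<lambda>x. N (f x))" by (rule isnorm_continuous_on_comp[OF nN contD[OF DK]])
  obtain x0 where x0D: "x0 \<in> D" and x0min: "\<And>y. y \<in> D \<Longrightarrow> N (f x0) \<le> N (f y)"
    using continuous_attains_inf[OF compactD[OF DK] _ contND] x1(1) by blast
  define m0 where "m0 = N (f x0)"
  have m0a: "m0 < \<alpha>"
  proof -
    have "m0 \<le> \<beta>" using x0min[OF x1(1)] x1(2) by (simp add: m0_def)
    moreover have "\<not> (\<alpha> \<le> m0 \<and> m0 \<le> \<beta>)" using nc DK x0D x0min by (auto simp: NC_def m0_def)
    ultimately show ?thesis by linarith
  qed
  have m00: "0 \<le> m0" by (simp add: m0_def isnorm_nonneg[OF nN])
  have cvD: "convex D" by (rule convexD[OF DK])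
  have "rel_interior D \<noteq> {}" using x0D rel_interior_eq_empty[OF cvD] by auto
  then obtain c where c: "c \<in> rel_interior D" by blast
  have cD: "c \<in> D" using c rel_interior_subset by blast
  define e where "e = min 1 ((\<alpha> - m0) / (2 * (N (f c) + 1)))"
  have Nfc0: "0 \<le> N (f c)" by (simp add: isnorm_nonneg[OF nN])
  have e0: "0 < e" using m0a Nfc0 by (simp add: e_def)
  have e1: "e \<le> 1" by (simp add: e_def)
  define a0 where "a0 = x0 - e *\<^sub>R (x0 - c)"
  have a0rel: "a0 \<in> rel_interior D" unfolding a0_def by (rule rel_interior_convex_shrink[OF cvD c x0D e0 e1])
  have a0D: "a0 \<in> D" using a0rel rel_interior_subset by blast
  have a0eq: "a0 = (1 - e) *\<^sub>R x0 + e *\<^sub>R c" by (simp add: a0_def vec_id2)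
  have fa0: "f a0 = (1 - e) *\<^sub>R f x0 + e *\<^sub>R f c"
    using aff_comb[OF DK x0D cD, of e] a0D a0eq by simp
  have Nfa0: "N (f a0) < \<alpha>"
  proof -
    have "N (f a0) \<le> (1 - e) * N (f x0) + (1 - (1 - e)) * N (f c)"
      using isnorm_conv[OF nN, of "1 - e" "f x0" "f c"] e0 e1 fa0 by simp
    also have "\<dots> \<le> m0 + e * N (f c)"
    proof -
      have "(1 - e) * N (f x0) \<le> 1 * N (f x0)" using e0 m00 by (intro mult_right_mono) (auto simp: m0_def)
      then show ?thesis by (simp add: m0_def)
    qed
    finally have n1: "N (f a0) \<le> m0 + e * N (f c)" .
    have "e * N (f c) \<le> e * (N (f c) + 1)" using e0 by simp
    also have "e * (N (f c) + 1) \<le> ((\<alpha> - m0) / (2 * (N (f c) + 1))) * (N (f c) + 1)"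
      using Nfc0 by (intro mult_right_mono) (auto simp: e_def)
    also have "\<dots> = (\<alpha> - m0) / 2" using Nfc0 by (simp add: field_simps)
    finally have "e * N (f c) \<le> (\<alpha> - m0) / 2" .
    then have "m0 + e * N (f c) < \<alpha>" using m0a by (simp add: field_simps)
    then show ?thesis using n1 by (rule le_less_trans[rotated])
  qed
  obtain r where contr: "continuous_on (D - {a0}) r" and rfr: "r ` (D - {a0}) \<subseteq> rel_frontier D"
    and rfix: "\<And>x. x \<in> rel_frontier D \<Longrightarrow> r x = x"
    and rray: "\<And>x. x \<in> D - {a0} \<Longrightarrow> \<exists>d\<ge>1. r x = a0 + d *\<^sub>R (x - a0)"
    using radial_retraction[OF cvD compact_imp_bounded[OF compactD[OF DK]] closedD[OF DK] a0rel] by blast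
  have frD: "rel_frontier D \<subseteq> D" using closedD[OF DK] by (auto simp: rel_frontier_def)
  have DA: "D \<subseteq> A" using DK by (auto simp: cplx_body_def)
  have notA0: "x \<noteq> a0" if "x \<in> D \<inter> W \<alpha>" for x
    using that Nfa0 by (auto simp: W_def)
  have seg: "closed_segment x (r x) \<subseteq> D \<inter> W \<alpha>" if x: "x \<in> D \<inter> W \<alpha>" for x
  proof
    fix z assume z: "z \<in> closed_segment x (r x)"
    have xD: "x \<in> D" and xa: "\<alpha> \<le> N (f x)" using x by (auto simp: W_def)
    have xa0: "x \<in> D - {a0}" using notA0[OF x] xD by simp
    obtain d where d1: "1 \<le> d" and rx: "r x = a0 + d *\<^sub>R (x - a0)" using rray[OF xa0] by blast
    have rxD: "r x \<in> D" using rfr xa0 frD by blast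
    have zD: "z \<in> D" using z closed_segment_subset[OF xD rxD cvD] by blast
    obtain u where u: "0 \<le> u" "u \<le> 1" "z = (1 - u) *\<^sub>R x + u *\<^sub>R r x" using z by (auto simp: in_segment)
    define s where "s = (1 - u) + u * d"
    have "u * 1 \<le> u * d" using u d1 by (intro mult_left_mono) auto
    then have s1: "1 \<le> s" by (simp add: s_def)
    have zeq: "z = (1 - s) *\<^sub>R a0 + s *\<^sub>R x" using u(3) rx vec_id1[of u x a0 d] by (simp add: s_def)
    have "f z = (1 - s) *\<^sub>R f a0 + s *\<^sub>R f x" using aff_comb[OF DK a0D xD, of s] zD zeq by simp
    moreover have "N (f x) \<le> N ((1 - s) *\<^sub>R f a0 + s *\<^sub>R f x)"
      by (rule isnorm_ray_mono[OF nN s1]) (use Nfa0 xa in linarith)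
    ultimately have "\<alpha> \<le> N (f z)" using xa by simp
    then show "z \<in> D \<inter> W \<alpha>" using zD DA by (auto simp: W_def)
  qed
  have F3: "D \<inter> \<Union>L' \<subseteq> rel_frontier D"
  proof
    fix x assume "x \<in> D \<inter> \<Union>L'"
    then obtain E where xD: "x \<in> D" and E: "E \<in> L'" "x \<in> E" by blast
    have EK: "E \<in> K" using E L'K by blast
    have fo: "(D \<inter> E) face_of D" by (rule interK[OF DK EK])
    have "D \<inter> E \<noteq> D"
    proof
      assume "D \<inter> E = D"
      then have "D \<subseteq> E" by blast
      then have "E = D" using Dmax E(1) by (auto simp: L'_def)
      then show False using E(1) by (simp add: L'_def)
    qed
    then have "D \<inter> E \<subseteq> rel_frontier D" using face_of_subset_rel_frontier[OF fo] by blast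
    then show "x \<in> rel_frontier D" using xD E by blast
  qed
  have F4: "rel_frontier D \<subseteq> \<Union>L'"
  proof
    fix x assume "x \<in> rel_frontier D"
    then obtain F where F: "F facet_of D" "x \<in> F"
      using rel_frontier_of_polyhedron[OF polytope_imp_polyhedron[OF simplexK[OF DK]]] by blast
    have "F face_of D" "F \<noteq> D" using F(1) by (auto simp: facet_of_def)
    then have "F \<in> L'" using Suc(4) DL by (auto simp: facecl_def L'_def)
    then show "x \<in> \<Union>L'" using F(2) by blast
  qed
  have closedW': "closed (\<Union>L' \<inter> W \<alpha>)"
  proof -
    have "finite L'" using L'K finK finite_subset by blast
    then have "closed (\<Union>L')" using L'K closedD by (intro closed_Union) auto
    then show ?thesis using closedW by (rule closed_Int)
  qed
  have closedDW: "closed (D \<inter> W \<alpha>)" using closedD[OF DK] closedW by (rule closed_Int)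
  have Xeq: "X = (D \<inter> W \<alpha>) \<union> (\<Union>L' \<inter> W \<alpha>)" using DL by (auto simp: X_def L'_def)
  define \<rho> where "\<rho> = (\<lambda>x. if x \<in> D then r x else x)"
  have cont\<rho>: "continuous_on X \<rho>"
    unfolding Xeq \<rho>_def
  proof (rule continuous_on_cases[OF closedDW closedW'])
    show "continuous_on (D \<inter> W \<alpha>) r" using contr by (rule continuous_on_subset) (use notA0 in auto)
    show "continuous_on (\<Union>L' \<inter> W \<alpha>) (\<lambda>x. x)" by (rule continuous_on_id)
    show "\<forall>x. x \<in> D \<inter> W \<alpha> \<and> x \<notin> D \<or> x \<in> \<Union>L' \<inter> W \<alpha> \<and> x \<in> D \<longrightarrow> r x = x"
      using F3 rfix by blast
  qed
  have seg': "closed_segment x (\<rho> x) \<subseteq> X" if "x \<in> X" for x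
  proof (cases "x \<in> D")
    case True
    then have "x \<in> D \<inter> W \<alpha>" using that by (auto simp: X_def)
    then show ?thesis using seg[of x] True DL by (auto simp: \<rho>_def X_def)
  next
    case False
    then show ?thesis using that by (simp add: \<rho>_def)
  qed
  have im\<rho>: "\<rho> ` X \<subseteq> X'"
  proof
    fix y assume "y \<in> \<rho> ` X"
    then obtain x where x: "x \<in> X" "y = \<rho> x" by blast
    show "y \<in> X'"
    proof (cases "x \<in> D")
      case True
      then have xDW: "x \<in> D \<inter> W \<alpha>" using x by (auto simp: X_def)
      have "r x \<in> rel_frontier D" using rfr xDW notA0[OF xDW] by blast
      moreover have "r x \<in> W \<alpha>" using seg[OF xDW] ends_in_segment(2)[of x "r x"] by blast
      ultimately show ?thesis using F4 x True by (auto simp: X'_def \<rho>_def)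
    next
      case False
      then show ?thesis using x Xeq by (auto simp: X'_def \<rho>_def)
    qed
  qed
  have XW: "X \<subseteq> W \<alpha>" by (auto simp: X_def)
  have h1: "homotopic_with_canon (\<lambda>_. True) X X id \<rho>"
    by (rule homotopic_with_linear[OF continuous_on_id' cont\<rho>]) (use seg' in simp)
  have h1': "homotopic_with_canon (\<lambda>_. True) X (W \<alpha>) id \<rho>"
    by (rule homotopic_with_subset_right[OF h1 XW])
  have h2: "homotopic_with_canon (\<lambda>_. True) X (W \<alpha>) (id \<circ> \<rho>) (\<psi>' \<circ> \<rho>)"
    by (rule homotopic_with_compose_continuous_right[OF hom\<psi>'[folded X'_def] cont\<rho>]) (use im\<rho> in auto)
  have h2': "homotopic_with_canon (\<lambda>_. True) X (W \<alpha>) \<rho> (\<psi>' \<circ> \<rho>)" using h2 by simp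
  show ?case
  proof (intro exI conjI)
    show "continuous_on (\<Union>L \<inter> W \<alpha>) (\<psi>' \<circ> \<rho>)"
      unfolding X_def[symmetric]
      by (rule continuous_on_compose[OF cont\<rho>]) (rule continuous_on_subset[OF cont\<psi>'[folded X'_def] im\<rho>])
    show "(\<psi>' \<circ> \<rho>) ` (\<Union>L \<inter> W \<alpha>) \<subseteq> W \<beta>"
    proof -
      have "(\<psi>' \<circ> \<rho>) ` X \<subseteq> \<psi>' ` X'" using im\<rho> by (auto simp: image_comp[symmetric])
      then show ?thesis using im\<psi>' by (simp add: X_def[symmetric] X'_def)
    qed
    show "homotopic_with_canon (\<lambda>_. True) (\<Union>L \<inter> W \<alpha>) (W \<alpha>) id (\<psi>' \<circ> \<rho>)"
      unfolding X_def[symmetric] by (rule homotopic_with_trans[OF h1' h2'])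
  qed
qed

end



context setting begin

lemma L3:
  assumes a: "0 < \<alpha>" "\<alpha> \<le> \<beta>" and nc: "NC \<alpha> \<beta>" and E: "Ext \<beta>"
  shows "Ext \<alpha>"
proof -
  have UK: "\<Union>K \<inter> W \<alpha> = W \<alpha>" using WA by (auto simp: cplx_body_def)
  have fcK: "facecl K" using faceK by (auto simp: facecl_def)
  obtain \<psi> where cont\<psi>: "continuous_on (W \<alpha>) \<psi>" and im\<psi>: "\<psi> ` W \<alpha> \<subseteq> W \<beta>"
    and hom: "homotopic_with_canon (\<lambda>_. True) (W \<alpha>) (W \<alpha>) id \<psi>"
  proof -
    have "Kn \<beta> \<subseteq> K" by (auto simp: Kn_def)
    from core_ind[OF a nc refl order_refl fcK this] show ?thesis unfolding UK using that by blast
  qed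
  obtain e where conte: "continuous_on A e" and enz: "e ` A \<subseteq> - {0}" and ef: "\<And>x. x \<in> W \<beta> \<Longrightarrow> e x = f x"
    using E by (auto simp: Ext_def)
  have conteW: "continuous_on (W \<alpha>) e" using conte WA by (rule continuous_on_subset)
  have contfW: "continuous_on (W \<alpha>) f" using contf WA by (rule continuous_on_subset)
  have eW: "e \<in> W \<alpha> \<rightarrow> - {0}"
  proof
    fix x assume "x \<in> W \<alpha>"
    then have "x \<in> A" using WA by blast
    then show "e x \<in> - {0}" using enz by blast
  qed
  have fW: "f \<in> W \<alpha> \<rightarrow> - {0}"
  proof
    fix x assume "x \<in> W \<alpha>"
    then have "\<alpha> \<le> N (f x)" by (simp add: W_def)
    then have "f x \<noteq> 0" using a isnorm_zero[OF nN] by auto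
    then show "f x \<in> - {0}" by simp
  qed
  have h2: "homotopic_with_canon (\<lambda>_. True) (W \<alpha>) (- {0}) (e \<circ> id) (e \<circ> \<psi>)"
    by (rule homotopic_with_compose_continuous_left[OF hom conteW eW])
  have h3: "homotopic_with_canon (\<lambda>_. True) (W \<alpha>) (- {0}) (f \<circ> id) (f \<circ> \<psi>)"
    by (rule homotopic_with_compose_continuous_left[OF hom contfW fW])
  have h2': "homotopic_with_canon (\<lambda>_. True) (W \<alpha>) (- {0}) e (f \<circ> \<psi>)"
  proof (rule homotopic_with_eq[OF h2])
    show "\<And>x. x \<in> topspace (top_of_set (W \<alpha>)) \<Longrightarrow> e x = (e \<circ> id) x" by simp
    show "\<And>x. x \<in> topspace (top_of_set (W \<alpha>)) \<Longrightarrow> (f \<circ> \<psi>) x = (e \<circ> \<psi>) x"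
      using im\<psi> ef by auto
  qed auto
  have h3': "homotopic_with_canon (\<lambda>_. True) (W \<alpha>) (- {0}) (f \<circ> \<psi>) f"
    using h3 by (simp add: homotopic_with_sym)
  have hom': "homotopic_with_canon (\<lambda>x. True) (W \<alpha>) (- {0}) e f"
    by (rule homotopic_with_trans[OF h2' h3'])
  have anr: "ANR (W \<alpha>) \<and> ANR A \<or> ANR (- {0::real^'n})"
    using open_imp_ANR[of "- {0::real^'n}"] by (simp add: open_Compl)
  have eA: "e \<in> A \<rightarrow> - {0}" using enz by auto
  obtain g' where "homotopic_with_canon (\<lambda>x. True) A (- {0}) e g'"
     "continuous_on A g'" "g' ` A \<subseteq> - {0}" "\<And>x. x \<in> W \<alpha> \<Longrightarrow> g' x = f x"
    using Borsuk_homotopy_extension_homotopic[OF closedinW anr conte eA hom'] by blast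
  then show ?thesis unfolding Ext_def by blast
qed

lemma main:
  shows "\<exists>D\<in>K. \<exists>x0\<in>D. N (f x0) = rob N K f \<and> (\<forall>x\<in>D. N (f x0) \<le> N (f x))"
proof (rule ccontr)
  assume neg: "\<not> ?thesis"
  define r where "r = rob N K f"
  have negs: "\<And>D x0. D \<in> K \<Longrightarrow> x0 \<in> D \<Longrightarrow> \<forall>x\<in>D. N (f x0) \<le> N (f x) \<Longrightarrow> N (f x0) \<noteq> r"
    using neg unfolding r_def by blast
  have rS: "r \<in> Sset" using rob_in by (simp add: r_def)
  have r0: "0 \<le> r" using rS by (simp add: Sset_def)
  have rpos: "0 < r"
  proof (rule ccontr)
    assume "\<not> 0 < r"
    then have "r = 0" using r0 by simp
    obtain x where "x \<in> A" "f x = 0" using root by blast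
    then obtain D where "D \<in> K" "x \<in> D" by (auto simp: cplx_body_def)
    moreover have "N (f x) = r" using \<open>f x = 0\<close> \<open>r = 0\<close> by (simp add: isnorm_zero[OF nN])
    moreover have "\<forall>y\<in>D. N (f x) \<le> N (f y)" using \<open>f x = 0\<close> by (simp add: isnorm_zero[OF nN] isnorm_nonneg[OF nN])
    ultimately show False using negs by blast
  qed
  define C where "C = (\<lambda>D. Inf ((\<lambda>x. N (f x)) ` D)) ` K"
  have finC: "finite C" using finK by (simp add: C_def)
  have inC: "N (f x0) \<in> C" if "D \<in> K" "x0 \<in> D" "\<forall>x\<in>D. N (f x0) \<le> N (f x)" for D x0
  proof -
    have e: "Inf ((\<lambda>x. N (f x)) ` D) = N (f x0)"
      by (rule cInf_eq_minimum) (use that in auto)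
    show ?thesis unfolding C_def by (rule image_eqI[where f="\<lambda>D. Inf ((\<lambda>x. N (f x)) ` D)", OF sym[OF e] that(1)])
  qed
  define C' where "C' = {c\<in>C. r < c}"
  have finC': "finite C'" using finC by (simp add: C'_def)
  define \<beta> where "\<beta> = (if C' = {} then r + 1 else (r + Min C') / 2)"
  have rb: "r < \<beta>"
  proof (cases "C' = {}")
    case True then show ?thesis by (simp add: \<beta>_def)
  next
    case False
    then have "Min C' \<in> C'" using finC' by simp
    then show ?thesis using False by (simp add: \<beta>_def C'_def)
  qed
  have nc: "NC r \<beta>"
    unfolding NC_def
  proof (intro ballI impI notI)
    fix D x0 assume D: "D \<in> K" "x0 \<in> D" and mn: "\<forall>x\<in>D. N (f x0) \<le> N (f x)"
      and rng: "r \<le> N (f x0) \<and> N (f x0) \<le> \<beta>"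
    have "N (f x0) \<noteq> r" by (rule negs[OF D mn])
    then have gt: "r < N (f x0)" using rng by simp
    then have "N (f x0) \<in> C'" using inC[OF D mn] by (simp add: C'_def)
    then have "C' \<noteq> {}" "Min C' \<le> N (f x0)" using finC' by auto
    then have "\<beta> < N (f x0)" using gt by (simp add: \<beta>_def)
    then show False using rng by simp
  qed
  have "\<beta> \<notin> Sset"
  proof
    assume "\<beta> \<in> Sset"
    then have "\<beta> \<le> Sup Sset" using bdd_S by (rule cSup_upper)
    then show False using rb by (simp add: r_def rob_eq)
  qed
  then have "\<not> (0 \<le> \<beta> \<and> (\<forall>g. perturbation N K f \<beta> g \<longrightarrow> (\<exists>x\<in>A. g x = 0)))"
    unfolding Sset_def by simp
  then have "\<not> (\<forall>g. perturbation N K f \<beta> g \<longrightarrow> (\<exists>x\<in>A. g x = 0))" using r0 rb by simp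
  then obtain g where g1: "perturbation N K f \<beta> g" and g2: "\<forall>x\<in>A. g x \<noteq> 0" by blast
  have b0: "0 < \<beta>" using rpos rb by linarith
  have "Ext \<beta>" by (rule L1[OF b0 g1 g2])
  then have "Ext r" by (rule L3[OF rpos less_imp_le[OF rb] nc])
  then obtain g' where g': "perturbation N K f r g'" "\<forall>x\<in>A. g' x \<noteq> 0" using L2[OF rpos] by blast
  have "\<forall>g. perturbation N K f r g \<longrightarrow> (\<exists>x\<in>A. g x = 0)" using rS unfolding Sset_def by simp
  then show False using g' by blast
qed

end

theorem corollary3p6:
  fixes K :: "'a::euclidean_space set set"
    and N :: "real ^ 'n \<Rightarrow> real"
    and f :: "'a \<Rightarrow> real ^ 'n"
  assumes "simplicial_complex K"
    and "is_norm N"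
    and "piecewise_linear_on K f"
    and "\<exists>x\<in>cplx_body K. f x = 0"
  shows "\<exists>D\<in>K. \<exists>x0\<in>D. N (f x0) = rob N K f \<and> (\<forall>x\<in>D. N (f x0) \<le> N (f x))"
proof -
  interpret setting K N f using assms by unfold_locales
  show ?thesis by (rule main)
qed

end
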